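(* Let $A\in\mathbb{R}^{n\times n}$, $B\in\mathbb{R}^{n\times m}$, $C\in\mathbb{R}^{p\times n}$ with $(A,C)$ observable, $\ell$ its observability index, and $\mathbf{A}_\ell,\mathbf{B}_\ell,Z_\ell$ as in the context. For each $\hat x\in\mathbb{R}^n$ and each sequence $\{u(k)\}_{k=0}^\infty$ there exists $\hat\xi$ such that the solution $x(\cdot)$ of $x^+=Ax+Bu$ with $x(0)=\hat x$, its output $y(\cdot)=Cx(\cdot)$, and the solution $\xi(\cdot)$ of $\xi^+=\mathbf{A}_\ell\xi+\mathbf{B}_\ell v$ with $\xi(\ell)=\hat\xi$ and input $v(k)=u(k)$ for $k\ge\ell$ satisfy, for all $k\ge\ell$, $\xi(k)=(y(k-\ell),\dots,y(k-1),u(k-\ell),\dots,u(k-1))$ and $y(k)=Z_\ell\xi(k)$.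
   Context: $(v_1,\dots,v_r)$ denotes a stacked column vector. The observability index $\ell$ is the smallest $l$ with $\operatorname{rank}[C;CA;\dots;CA^{l-1}]=n$. Define $\mathcal{O}_\ell=[C;CA;\dots;CA^{\ell-1}]$; $\mathcal{T}_\ell\in\mathbb{R}^{p\ell\times m\ell}$ block lower triangular with $(i,j)$ block $CA^{i-j-1}B$ if $i>j$ and $0$ otherwise; $\mathcal{R}_\ell=[A^{\ell-1}B\ \cdots\ AB\ B]$; $\mathcal{O}_\ell^{L}$ a fixed left inverse of $\mathcal{O}_\ell$. $\mathbf{F}_\ell=\mathrm{blockdiag}(S_p,S_m)$ where $S_q\in\mathbb{R}^{q\ell\times q\ell}$ has blocks $I_q$ at block positions $(i,i+1)$, $i=1,\dots,\ell-1$, zeros elsewhere; $\mathbf{L}_\ell\in\mathbb{R}^{(p\ell+m\ell)\times p}$ has $I_p$ in rows $p\ell-p+1,\dots,p\ell$, zeros elsewhere; $\mathbf{B}_\ell\in\mathbb{R}^{(p\ell+m\ell)\times m}$ has $I_m$ in its last $m$ rows, zeros elsewhere. $Z_\ell=[CA^\ell\mathcal{O}_\ell^L\ \ C\mathcal{R}_\ell-CA^\ell\mathcal{O}_\ell^L\mathcal{T}_\ell]$, $\mathbf{A}_\ell=\mathbf{F}_\ell+\mathbf{L}_\ell Z_\ell$. *)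

theory Defs
  imports "Jordan_Normal_Form.DL_Rank"
begin

text \<open>Observability matrix O_l = [C; CA; ...; CA^(l-1)], of size (p*l) x n.\<close>
definition obs_mat :: "real mat \<Rightarrow> real mat \<Rightarrow> nat \<Rightarrow> real mat" where
  "obs_mat A C l = mat (dim_row C * l) (dim_col A)
     (\<lambda>(i,j). (C * A ^\<^sub>m (i div dim_row C)) $$ (i mod dim_row C, j))"

definition observable :: "real mat \<Rightarrow> real mat \<Rightarrow> bool" where
  "observable A C = (\<exists>l. vec_space.rank (dim_row C * l) (obs_mat A C l) = dim_col A)"

definition obs_index :: "real mat \<Rightarrow> real mat \<Rightarrow> nat" where
  "obs_index A C = (LEAST l. vec_space.rank (dim_row C * l) (obs_mat A C l) = dim_col A)"

text \<open>T_l: (p*l) x (m*l) block lower triangular, block (i,j) = C A^(i-j-1) B for i>j.\<close>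
definition toeplitz_mat :: "real mat \<Rightarrow> real mat \<Rightarrow> real mat \<Rightarrow> nat \<Rightarrow> real mat" where
  "toeplitz_mat A B C l = mat (dim_row C * l) (dim_col B * l)
     (\<lambda>(i,j). let bi = i div dim_row C; bj = j div dim_col B in
        if bi > bj then (C * A ^\<^sub>m (bi - bj - 1) * B) $$ (i mod dim_row C, j mod dim_col B)
        else 0)"

text \<open>R_l = [A^(l-1) B, ..., A B, B], of size n x (m*l).\<close>
definition reach_mat :: "real mat \<Rightarrow> real mat \<Rightarrow> nat \<Rightarrow> real mat" where
  "reach_mat A B l = mat (dim_row B) (dim_col B * l)
     (\<lambda>(i,j). (A ^\<^sub>m (l - 1 - j div dim_col B) * B) $$ (i, j mod dim_col B))"

definition Z_mat :: "real mat \<Rightarrow> real mat \<Rightarrow> real mat \<Rightarrow> real mat \<Rightarrow> nat \<Rightarrow> real mat" where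
  "Z_mat A B C OL l =
     (let M1 = C * A ^\<^sub>m l * OL;
          M2 = C * reach_mat A B l - C * A ^\<^sub>m l * OL * toeplitz_mat A B C l;
          pl = dim_row C * l
      in mat (dim_row C) (pl + dim_col B * l)
           (\<lambda>(i,j). if j < pl then M1 $$ (i,j) else M2 $$ (i, j - pl)))"

definition shift_mat :: "nat \<Rightarrow> nat \<Rightarrow> real mat" where
  "shift_mat q l = mat (q*l) (q*l)
     (\<lambda>(i,j). if j div q = i div q + 1 \<and> j mod q = i mod q then 1 else 0)"

definition F_mat :: "nat \<Rightarrow> nat \<Rightarrow> nat \<Rightarrow> real mat" where
  "F_mat p m l = four_block_mat (shift_mat p l) (0\<^sub>m (p*l) (m*l)) (0\<^sub>m (m*l) (p*l)) (shift_mat m l)"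

definition L_mat :: "nat \<Rightarrow> nat \<Rightarrow> nat \<Rightarrow> real mat" where
  "L_mat p m l = mat (p*l + m*l) p
     (\<lambda>(i,j). if p*l - p \<le> i \<and> i < p*l \<and> i - (p*l - p) = j then 1 else 0)"

definition Bl_mat :: "nat \<Rightarrow> nat \<Rightarrow> nat \<Rightarrow> real mat" where
  "Bl_mat p m l = mat (p*l + m*l) m
     (\<lambda>(i,j). if p*l + m*l - m \<le> i \<and> i - (p*l + m*l - m) = j then 1 else 0)"

definition Al_mat :: "real mat \<Rightarrow> real mat \<Rightarrow> real mat \<Rightarrow> real mat \<Rightarrow> nat \<Rightarrow> real mat" where
  "Al_mat A B C OL l = F_mat (dim_row C) (dim_col B) l + L_mat (dim_row C) (dim_col B) l * Z_mat A B C OL l"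

definition past_window :: "nat \<Rightarrow> nat \<Rightarrow> nat \<Rightarrow> (nat \<Rightarrow> real vec) \<Rightarrow> (nat \<Rightarrow> real vec) \<Rightarrow> nat \<Rightarrow> real vec" where
  "past_window p m l y u k = vec (p*l + m*l)
     (\<lambda>i. if i < p*l then y (k - l + i div p) $ (i mod p)
          else u (k - l + (i - p*l) div m) $ ((i - p*l) mod m))"

end

theory Submission
  imports Defs
begin

lemma sum_div_mod:
  fixes f :: "nat \<Rightarrow> nat \<Rightarrow> 'a::comm_monoid_add"
  shows "(\<Sum>j\<in>{0..<m*l}. f (j div m) (j mod m)) = (\<Sum>b<l. \<Sum>c<m. f b c)"
proof (induction l)
  case 0 then show ?case by simp
next
  case (Suc l)
  have "{0..<m*Suc l} = {0..<m*l} \<union> {m*l..<m*l+m}" by auto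
  then have "(\<Sum>j\<in>{0..<m*Suc l}. f (j div m) (j mod m))
     = (\<Sum>j\<in>{0..<m*l}. f (j div m) (j mod m)) + (\<Sum>j\<in>{m*l..<m*l+m}. f (j div m) (j mod m))"
    by (simp add: sum.union_disjoint ivl_disj_int)
  also have "(\<Sum>j\<in>{m*l..<m*l+m}. f (j div m) (j mod m)) = (\<Sum>c<m. f l c)"
  proof -
    have "(\<Sum>j\<in>{m*l..<m*l+m}. f (j div m) (j mod m)) = (\<Sum>c\<in>{0..<m}. f ((c + m*l) div m) ((c+m*l) mod m))"
      using sum.shift_bounds_nat_ivl[of "\<lambda>j. f (j div m) (j mod m)" 0 "m*l" m] by (simp add: add.commute)
    also have "\<dots> = (\<Sum>c<m. f l c)"
      by (rule sum.cong) auto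
    finally show ?thesis .
  qed
  finally show ?case using Suc by simp
qed

lemma mult_row_unit:
  fixes M :: "real mat"
  assumes "M \<in> carrier_mat r c" "i < r" "t < c" "\<And>j. j < c \<Longrightarrow> M $$ (i,j) = (if j = t then 1 else 0)"
    "v \<in> carrier_vec c"
  shows "(M *\<^sub>v v) $ i = v $ t"
proof -
  have "(M *\<^sub>v v) $ i = (\<Sum>j\<in>{0..<c}. M $$ (i,j) * v $ j)"
    using assms by (simp add: scalar_prod_def)
  also have "\<dots> = (\<Sum>j\<in>{0..<c}. if j = t then v $ j else 0)"
    by (rule sum.cong) (auto simp: assms)
  also have "\<dots> = v $ t" using assms(3) by simp
  finally show ?thesis .
qed

lemma mult_row_zero:
  fixes M :: "real mat"
  assumes "M \<in> carrier_mat r c" "i < r" "\<And>j. j < c \<Longrightarrow> M $$ (i,j) = 0"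
    "v \<in> carrier_vec c"
  shows "(M *\<^sub>v v) $ i = 0"
proof -
  have "(M *\<^sub>v v) $ i = (\<Sum>j\<in>{0..<c}. M $$ (i,j) * v $ j)"
    using assms by (simp add: scalar_prod_def)
  also have "\<dots> = 0"
    by (rule sum.neutral) (auto simp: assms)
  finally show ?thesis .
qed

lemma shift_iff:
  fixes q :: nat assumes "q > 0"
  shows "(j div q = i div q + 1 \<and> j mod q = i mod q) \<longleftrightarrow> j = i + q"
proof
  assume h: "j div q = i div q + 1 \<and> j mod q = i mod q"
  have "j = (j div q) * q + j mod q" by simp
  also have "\<dots> = (i div q) * q + i mod q + q" using h by (simp add: algebra_simps)
  finally show "j = i + q" by simp
qed (use assms in auto)

lemma pow_mat_Suc_left:
  fixes A :: "real mat"
  assumes "A \<in> carrier_mat n n"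
  shows "A * A ^\<^sub>m k = A ^\<^sub>m (Suc k)"
proof (induction k)
  case 0 then show ?case using assms by simp
next
  case (Suc k)
  have "A * A ^\<^sub>m Suc k = (A * A ^\<^sub>m k) * A"
    using assms by (simp add: assoc_mult_mat[of A n n _ n _ n])
  then show ?case using Suc by simp
qed


fun Ssum :: "real mat \<Rightarrow> real mat \<Rightarrow> (nat \<Rightarrow> real vec) \<Rightarrow> nat \<Rightarrow> nat \<Rightarrow> real vec" where
  "Ssum A B u s 0 = 0\<^sub>v (dim_row A)"
| "Ssum A B u s (Suc j) = A *\<^sub>v Ssum A B u s j + B *\<^sub>v u (s + j)"

lemma Ssum_carrier:
  assumes "A \<in> carrier_mat n n" "B \<in> carrier_mat n m" "\<And>k. u k \<in> carrier_vec m"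
  shows "Ssum A B u s j \<in> carrier_vec n"
proof (induction j)
  case 0 then show ?case using assms(1) by simp
next
  case (Suc j)
  have "A *\<^sub>v Ssum A B u s j \<in> carrier_vec n" using mult_mat_vec_carrier[OF assms(1) Suc] .
  moreover have "B *\<^sub>v u (s + j) \<in> carrier_vec n" using mult_mat_vec_carrier[OF assms(2) assms(3)] .
  ultimately show ?case by simp
qed

lemma x_shift:
  assumes A: "A \<in> carrier_mat n n" and B: "B \<in> carrier_mat n m"
    and u: "\<And>k. u k \<in> carrier_vec m" and x: "\<And>k. x k \<in> carrier_vec n"
    and rec: "\<And>k. x (Suc k) = A *\<^sub>v x k + B *\<^sub>v u k"
  shows "x (s + j) = A ^\<^sub>m j *\<^sub>v x s + Ssum A B u s j"
proof (induction j)
  case 0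
  have d: "dim_row A = n" using A by simp
  show ?case unfolding pow_mat.simps Ssum.simps d add_0_right
    using x[of s] by simp
next
  case (Suc j)
  have S: "Ssum A B u s j \<in> carrier_vec n" by (rule Ssum_carrier[OF A B u])
  have P: "A ^\<^sub>m j *\<^sub>v x s \<in> carrier_vec n" using mult_mat_vec_carrier[OF pow_carrier_mat[OF A] x] .
  have AP: "A *\<^sub>v (A ^\<^sub>m j *\<^sub>v x s) \<in> carrier_vec n" using mult_mat_vec_carrier[OF A P] .
  have AS: "A *\<^sub>v Ssum A B u s j \<in> carrier_vec n" using mult_mat_vec_carrier[OF A S] .
  have BU: "B *\<^sub>v u (s + j) \<in> carrier_vec n" using mult_mat_vec_carrier[OF B u] .
  have "x (s + Suc j) = A *\<^sub>v x (s + j) + B *\<^sub>v u (s + j)"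
    using rec[of "s+j"] by (simp only: add_Suc_right)
  also have "\<dots> = A *\<^sub>v (A ^\<^sub>m j *\<^sub>v x s + Ssum A B u s j) + B *\<^sub>v u (s + j)"
    by (simp only: Suc.IH)
  also have "\<dots> = (A *\<^sub>v (A ^\<^sub>m j *\<^sub>v x s) + A *\<^sub>v Ssum A B u s j) + B *\<^sub>v u (s + j)"
    by (simp only: mult_add_distrib_mat_vec[OF A P S])
  also have "\<dots> = A *\<^sub>v (A ^\<^sub>m j *\<^sub>v x s) + (A *\<^sub>v Ssum A B u s j + B *\<^sub>v u (s + j))"
    by (rule assoc_add_vec[OF AP AS BU])
  also have "A *\<^sub>v (A ^\<^sub>m j *\<^sub>v x s) = A ^\<^sub>m Suc j *\<^sub>v x s"
    unfolding pow_mat_Suc_left[OF A, symmetric]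
    by (rule assoc_mult_mat_vec[OF A pow_carrier_mat[OF A] x, symmetric])
  finally show ?case by (simp only: Ssum.simps)
qed

lemma S_comp:
  assumes A: "A \<in> carrier_mat n n" and B: "B \<in> carrier_mat n m"
    and u: "\<And>k. u k \<in> carrier_vec m"
  shows "M \<in> carrier_mat k n \<Longrightarrow> r < k \<Longrightarrow>
    (M *\<^sub>v Ssum A B u s q) $ r = (\<Sum>b<q. (M * A ^\<^sub>m (q - 1 - b) * B *\<^sub>v u (s + b)) $ r)"
proof (induction q arbitrary: M)
  case 0 then show ?case using A by simp
next
  case (Suc q)
  have S: "Ssum A B u s q \<in> carrier_vec n" by (rule Ssum_carrier[OF A B u])
  have MA: "M * A \<in> carrier_mat k n" using Suc.prems A by simp
  have AS: "A *\<^sub>v Ssum A B u s q \<in> carrier_vec n" using A S by simp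
  have BU: "B *\<^sub>v u (s + q) \<in> carrier_vec n" using B u by simp
  have "(M *\<^sub>v Ssum A B u s (Suc q)) = M *\<^sub>v (A *\<^sub>v Ssum A B u s q) + M *\<^sub>v (B *\<^sub>v u (s + q))"
    unfolding Ssum.simps by (rule mult_add_distrib_mat_vec[OF Suc.prems(1) AS BU])
  also have "\<dots> = (M * A) *\<^sub>v Ssum A B u s q + (M * B) *\<^sub>v u (s + q)"
    by (simp only: assoc_mult_mat_vec[OF Suc.prems(1) A S] assoc_mult_mat_vec[OF Suc.prems(1) B u])
  finally have "(M *\<^sub>v Ssum A B u s (Suc q)) $ r = ((M * A) *\<^sub>v Ssum A B u s q) $ r + ((M * B) *\<^sub>v u (s + q)) $ r"
    using Suc.prems by simp
  also have "((M * A) *\<^sub>v Ssum A B u s q) $ r = (\<Sum>b<q. (M * A * A ^\<^sub>m (q - 1 - b) * B *\<^sub>v u (s + b)) $ r)"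
    using Suc.IH[OF MA Suc.prems(2)] .
  also have "\<dots> = (\<Sum>b<q. (M * A ^\<^sub>m (Suc q - 1 - b) * B *\<^sub>v u (s + b)) $ r)"
  proof (rule sum.cong)
    fix b assume "b \<in> {..<q}"
    then have e: "Suc (q - 1 - b) = Suc q - 1 - b" by auto
    have AA: "A * A ^\<^sub>m (q - 1 - b) = A ^\<^sub>m (Suc q - 1 - b)"
      using pow_mat_Suc_left[OF A, of "q - 1 - b"] unfolding e .
    have "M * A * A ^\<^sub>m (q - 1 - b) = M * (A * A ^\<^sub>m (q - 1 - b))"
      by (rule assoc_mult_mat[OF Suc.prems(1) A pow_carrier_mat[OF A]])
    also have "\<dots> = M * A ^\<^sub>m (Suc q - 1 - b)" by (simp only: AA)
    finally show "(M * A * A ^\<^sub>m (q - 1 - b) * B *\<^sub>v u (s + b)) $ r = (M * A ^\<^sub>m (Suc q - 1 - b) * B *\<^sub>v u (s + b)) $ r"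
      by simp
  qed simp
  finally have fin: "(M *\<^sub>v Ssum A B u s (Suc q)) $ r = (\<Sum>b<q. (M * A ^\<^sub>m (Suc q - 1 - b) * B *\<^sub>v u (s + b)) $ r) + ((M * B) *\<^sub>v u (s + q)) $ r" .
  have MB: "M * A ^\<^sub>m (Suc q - 1 - q) * B = M * B"
  proof -
    have "A ^\<^sub>m (Suc q - 1 - q) = 1\<^sub>m n" using A by simp
    then show ?thesis using right_mult_one_mat[OF Suc.prems(1)] by simp
  qed
  show ?case unfolding sum.lessThan_Suc MB by (rule fin)
qed


lemma mat_vec_sum:
  fixes M :: "real mat"
  assumes "M \<in> carrier_mat a c" "v \<in> carrier_vec c" "r < a"
  shows "(\<Sum>j<c. M $$ (r, j) * v $ j) = (M *\<^sub>v v) $ r"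
  using assms by (simp add: scalar_prod_def atLeast0LessThan)

lemma obs_mat_carrier:
  assumes "A \<in> carrier_mat n n" "C \<in> carrier_mat p n"
  shows "obs_mat A C l \<in> carrier_mat (p*l) n"
  using assms unfolding obs_mat_def by simp

lemma toeplitz_carrier:
  assumes "B \<in> carrier_mat n m" "C \<in> carrier_mat p n"
  shows "toeplitz_mat A B C l \<in> carrier_mat (p*l) (m*l)"
  using assms unfolding toeplitz_mat_def by simp

lemma reach_carrier:
  assumes "B \<in> carrier_mat n m"
  shows "reach_mat A B l \<in> carrier_mat n (m*l)"
  using assms unfolding reach_mat_def by simp

lemma obs_row:
  assumes A: "A \<in> carrier_mat n n" and C: "C \<in> carrier_mat p n" and v: "v \<in> carrier_vec n"
    and i: "i < p*l"
  shows "(obs_mat A C l *\<^sub>v v) $ i = ((C * A ^\<^sub>m (i div p)) *\<^sub>v v) $ (i mod p)"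
proof -
  have p: "p > 0" using i by (cases p) auto
  have CA: "C * A ^\<^sub>m (i div p) \<in> carrier_mat p n" using A C by simp
  have r: "i mod p < p" using p by simp
  have "(obs_mat A C l *\<^sub>v v) $ i = (\<Sum>j<n. obs_mat A C l $$ (i, j) * v $ j)"
    using mat_vec_sum[OF obs_mat_carrier[OF A C] v i] by simp
  also have "\<dots> = (\<Sum>j<n. (C * A ^\<^sub>m (i div p)) $$ (i mod p, j) * v $ j)"
    by (rule sum.cong) (use A C i in \<open>auto simp: obs_mat_def\<close>)
  also have "\<dots> = ((C * A ^\<^sub>m (i div p)) *\<^sub>v v) $ (i mod p)"
    by (rule mat_vec_sum[OF CA v r])
  finally show ?thesis .
qed

lemma sum_if_less:
  fixes f :: "nat \<Rightarrow> real"
  assumes "q \<le> l"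
  shows "(\<Sum>b<l. if b < q then f b else 0) = (\<Sum>b<q. f b)"
proof -
  have "(\<Sum>b<l. if b < q then f b else 0) = (\<Sum>b\<in>{..<l} \<inter> {b. b < q}. f b)"
    by (simp add: sum.inter_restrict)
  also have "{..<l} \<inter> {b. b < q} = {..<q}" using assms by auto
  finally show ?thesis .
qed

lemma toep_row:
  assumes A: "A \<in> carrier_mat n n" and B: "B \<in> carrier_mat n m" and C: "C \<in> carrier_mat p n"
    and u: "\<And>k. u k \<in> carrier_vec m" and i: "i < p*l"
  shows "(toeplitz_mat A B C l *\<^sub>v vec (m*l) (\<lambda>j. u (s + j div m) $ (j mod m))) $ i
    = (\<Sum>b < i div p. ((C * A ^\<^sub>m (i div p - 1 - b) * B) *\<^sub>v u (s + b)) $ (i mod p))"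
proof -
  define q where "q = i div p"
  define r where "r = i mod p"
  have p: "p > 0" using i by (cases p) auto
  have ql: "q < l" using i p unfolding q_def by (simp add: div_less_iff_less_mult mult.commute)
  have rp: "r < p" using p unfolding r_def by simp
  define g where "g = (\<lambda>b c. (if b < q then (C * A ^\<^sub>m (q - b - 1) * B) $$ (r, c) else 0) * u (s + b) $ c)"
  have "(toeplitz_mat A B C l *\<^sub>v vec (m*l) (\<lambda>j. u (s + j div m) $ (j mod m))) $ i
     = (\<Sum>j<m*l. toeplitz_mat A B C l $$ (i, j) * vec (m*l) (\<lambda>j. u (s + j div m) $ (j mod m)) $ j)"
    using mat_vec_sum[OF toeplitz_carrier[OF B C, of A l] vec_carrier i] by simp
  also have "\<dots> = (\<Sum>j\<in>{0..<m*l}. g (j div m) (j mod m))"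
    unfolding atLeast0LessThan
    by (rule sum.cong) (use B C i in \<open>auto simp: toeplitz_mat_def g_def q_def r_def Let_def\<close>)
  also have "\<dots> = (\<Sum>b<l. \<Sum>c<m. g b c)" by (rule sum_div_mod)
  also have "\<dots> = (\<Sum>b<l. if b < q then ((C * A ^\<^sub>m (q - 1 - b) * B) *\<^sub>v u (s + b)) $ r else 0)"
  proof (rule sum.cong)
    fix b assume "b \<in> {..<l}"
    show "(\<Sum>c<m. g b c) = (if b < q then ((C * A ^\<^sub>m (q - 1 - b) * B) *\<^sub>v u (s + b)) $ r else 0)"
    proof (cases "b < q")
      case True
      have M: "C * A ^\<^sub>m (q - 1 - b) * B \<in> carrier_mat p m"
        by (rule mult_carrier_mat[OF mult_carrier_mat[OF C pow_carrier_mat[OF A]] B])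
      have "(\<Sum>c<m. g b c) = (\<Sum>c<m. (C * A ^\<^sub>m (q - 1 - b) * B) $$ (r, c) * u (s + b) $ c)"
        using True by (simp add: g_def)
      also have "\<dots> = ((C * A ^\<^sub>m (q - 1 - b) * B) *\<^sub>v u (s + b)) $ r"
        by (rule mat_vec_sum[OF M u rp])
      finally show ?thesis using True by simp
    qed (simp add: g_def)
  qed simp
  also have "\<dots> = (\<Sum>b<q. ((C * A ^\<^sub>m (q - 1 - b) * B) *\<^sub>v u (s + b)) $ r)"
    by (rule sum_if_less) (use ql in simp)
  finally show ?thesis unfolding q_def r_def .
qed

lemma reach_row:
  assumes A: "A \<in> carrier_mat n n" and B: "B \<in> carrier_mat n m"
    and u: "\<And>k. u k \<in> carrier_vec m" and i: "i < n"
  shows "(reach_mat A B l *\<^sub>v vec (m*l) (\<lambda>j. u (s + j div m) $ (j mod m))) $ i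
    = (\<Sum>b<l. ((A ^\<^sub>m (l - 1 - b) * B) *\<^sub>v u (s + b)) $ i)"
proof -
  define g where "g = (\<lambda>b c. (A ^\<^sub>m (l - 1 - b) * B) $$ (i, c) * u (s + b) $ c)"
  have "(reach_mat A B l *\<^sub>v vec (m*l) (\<lambda>j. u (s + j div m) $ (j mod m))) $ i
     = (\<Sum>j<m*l. reach_mat A B l $$ (i, j) * vec (m*l) (\<lambda>j. u (s + j div m) $ (j mod m)) $ j)"
    using mat_vec_sum[OF reach_carrier[OF B, of A l] vec_carrier i] by simp
  also have "\<dots> = (\<Sum>j\<in>{0..<m*l}. g (j div m) (j mod m))"
    unfolding atLeast0LessThan
    by (rule sum.cong) (use B i in \<open>auto simp: reach_mat_def g_def\<close>)
  also have "\<dots> = (\<Sum>b<l. \<Sum>c<m. g b c)" by (rule sum_div_mod)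
  also have "\<dots> = (\<Sum>b<l. ((A ^\<^sub>m (l - 1 - b) * B) *\<^sub>v u (s + b)) $ i)"
  proof (rule sum.cong)
    fix b assume "b \<in> {..<l}"
    have M: "A ^\<^sub>m (l - 1 - b) * B \<in> carrier_mat n m"
      by (rule mult_carrier_mat[OF pow_carrier_mat[OF A] B])
    show "(\<Sum>c<m. g b c) = ((A ^\<^sub>m (l - 1 - b) * B) *\<^sub>v u (s + b)) $ i"
      unfolding g_def by (rule mat_vec_sum[OF M u i])
  qed simp
  finally show ?thesis .
qed


lemma Yv_eq:
  assumes A: "A \<in> carrier_mat n n" and B: "B \<in> carrier_mat n m" and C: "C \<in> carrier_mat p n"
    and u: "\<And>k. u k \<in> carrier_vec m" and x: "\<And>k. x k \<in> carrier_vec n"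
    and rec: "\<And>k. x (Suc k) = A *\<^sub>v x k + B *\<^sub>v u k"
  shows "vec (p*l) (\<lambda>i. (C *\<^sub>v x (s + i div p)) $ (i mod p))
    = obs_mat A C l *\<^sub>v x s + toeplitz_mat A B C l *\<^sub>v vec (m*l) (\<lambda>j. u (s + j div m) $ (j mod m))"
    (is "?L = ?O + ?T")
proof (rule eq_vecI)
  have dO: "dim_vec ?O = p*l" using obs_mat_carrier[OF A C, of l] by simp
  have dT: "dim_vec ?T = p*l" using toeplitz_carrier[OF B C, of A l] by simp
  show "dim_vec ?L = dim_vec (?O + ?T)" using dT by simp
  fix i assume "i < dim_vec (?O + ?T)"
  then have i: "i < p*l" using dT by simp
  define q where "q = i div p"
  define r where "r = i mod p"
  have p: "p > 0" using i by (cases p) auto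
  have rp: "r < p" using p unfolding r_def by simp
  have P: "A ^\<^sub>m q *\<^sub>v x s \<in> carrier_vec n" using mult_mat_vec_carrier[OF pow_carrier_mat[OF A] x] .
  have S: "Ssum A B u s q \<in> carrier_vec n" by (rule Ssum_carrier[OF A B u])
  have "?L $ i = (C *\<^sub>v x (s + q)) $ r" using i unfolding q_def r_def by simp
  also have "x (s + q) = A ^\<^sub>m q *\<^sub>v x s + Ssum A B u s q" by (rule x_shift[where u=u and x=x, OF A B u x rec])
  also have "C *\<^sub>v (A ^\<^sub>m q *\<^sub>v x s + Ssum A B u s q) = C *\<^sub>v (A ^\<^sub>m q *\<^sub>v x s) + C *\<^sub>v Ssum A B u s q"
    by (rule mult_add_distrib_mat_vec[OF C P S])
  also have "(C *\<^sub>v (A ^\<^sub>m q *\<^sub>v x s) + C *\<^sub>v Ssum A B u s q) $ r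
     = (C *\<^sub>v (A ^\<^sub>m q *\<^sub>v x s)) $ r + (C *\<^sub>v Ssum A B u s q) $ r"
    using rp C by simp
  also have "C *\<^sub>v (A ^\<^sub>m q *\<^sub>v x s) = (C * A ^\<^sub>m q) *\<^sub>v x s"
    by (rule assoc_mult_mat_vec[OF C pow_carrier_mat[OF A] x, symmetric])
  also have "(C *\<^sub>v Ssum A B u s q) $ r = (\<Sum>b<q. (C * A ^\<^sub>m (q - 1 - b) * B *\<^sub>v u (s + b)) $ r)"
    by (rule S_comp[OF A B u C rp])
  also have "\<dots> = ?T $ i"
    using toep_row[where u=u and s=s, OF A B C u i] unfolding q_def r_def by simp
  also have "((C * A ^\<^sub>m q) *\<^sub>v x s) $ r = ?O $ i"
    using obs_row[OF A C x i] unfolding q_def r_def by simp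
  finally show "?L $ i = (?O + ?T) $ i" using i dT by simp
qed

lemma R_eq:
  assumes A: "A \<in> carrier_mat n n" and B: "B \<in> carrier_mat n m"
    and u: "\<And>k. u k \<in> carrier_vec m"
  shows "Ssum A B u s l = reach_mat A B l *\<^sub>v vec (m*l) (\<lambda>j. u (s + j div m) $ (j mod m))"
proof (rule eq_vecI)
  have S: "Ssum A B u s l \<in> carrier_vec n" by (rule Ssum_carrier[OF A B u])
  have dR: "dim_vec (reach_mat A B l *\<^sub>v vec (m*l) (\<lambda>j. u (s + j div m) $ (j mod m))) = n"
    using reach_carrier[OF B, of A l] by simp
  show "dim_vec (Ssum A B u s l) = dim_vec (reach_mat A B l *\<^sub>v vec (m*l) (\<lambda>j. u (s + j div m) $ (j mod m)))"
    using S dR by simp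
  fix i assume "i < dim_vec (reach_mat A B l *\<^sub>v vec (m*l) (\<lambda>j. u (s + j div m) $ (j mod m)))"
  then have i: "i < n" using dR by simp
  have "Ssum A B u s l $ i = (1\<^sub>m n *\<^sub>v Ssum A B u s l) $ i"
    using one_mult_mat_vec[OF S] by simp
  also have "\<dots> = (\<Sum>b<l. (1\<^sub>m n * A ^\<^sub>m (l - 1 - b) * B *\<^sub>v u (s + b)) $ i)"
    by (rule S_comp[OF A B u one_carrier_mat i])
  also have "\<dots> = (\<Sum>b<l. (A ^\<^sub>m (l - 1 - b) * B *\<^sub>v u (s + b)) $ i)"
    using left_mult_one_mat[OF pow_carrier_mat[OF A]] by simp
  also have "\<dots> = (reach_mat A B l *\<^sub>v vec (m*l) (\<lambda>j. u (s + j div m) $ (j mod m))) $ i"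
    using reach_row[where u=u and s=s and l=l, OF A B u i] by simp
  finally show "Ssum A B u s l $ i = (reach_mat A B l *\<^sub>v vec (m*l) (\<lambda>j. u (s + j div m) $ (j mod m))) $ i" .
qed


lemma Z_window:
  assumes A: "A \<in> carrier_mat n n" and B: "B \<in> carrier_mat n m" and C: "C \<in> carrier_mat p n"
    and OL: "OL \<in> carrier_mat n (p * l)" and OLO: "OL * obs_mat A C l = 1\<^sub>m n"
    and u: "\<And>k. u k \<in> carrier_vec m" and x: "\<And>k. x k \<in> carrier_vec n"
    and rec: "\<And>k. x (Suc k) = A *\<^sub>v x k + B *\<^sub>v u k"
    and kl: "l \<le> k"
  shows "Z_mat A B C OL l *\<^sub>v past_window p m l (\<lambda>j. C *\<^sub>v x j) u k = C *\<^sub>v x k"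
proof -
  define s where "s = k - l"
  define Yv where "Yv = vec (p*l) (\<lambda>i. (C *\<^sub>v x (s + i div p)) $ (i mod p))"
  define Uv where "Uv = vec (m*l) (\<lambda>j. u (s + j div m) $ (j mod m))"
  define Ob where "Ob = obs_mat A C l"
  define T where "T = toeplitz_mat A B C l"
  define R where "R = reach_mat A B l"
  define Al where "Al = A ^\<^sub>m l"
  define M1 where "M1 = C * Al * OL"
  define M2 where "M2 = C * R - C * Al * OL * T"
  have Yc: "Yv \<in> carrier_vec (p*l)" unfolding Yv_def by simp
  have Uc: "Uv \<in> carrier_vec (m*l)" unfolding Uv_def by simp
  have Oc: "Ob \<in> carrier_mat (p*l) n" unfolding Ob_def by (rule obs_mat_carrier[OF A C])
  have Tc: "T \<in> carrier_mat (p*l) (m*l)" unfolding T_def by (rule toeplitz_carrier[OF B C])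
  have Rc: "R \<in> carrier_mat n (m*l)" unfolding R_def by (rule reach_carrier[OF B])
  have Alc: "Al \<in> carrier_mat n n" unfolding Al_def by (rule pow_carrier_mat[OF A])
  have CAl: "C * Al \<in> carrier_mat p n" using mult_carrier_mat[OF C Alc] .
  have CAlOL: "C * Al * OL \<in> carrier_mat p (p*l)" using mult_carrier_mat[OF CAl OL] .
  have CAlOLT: "C * Al * OL * T \<in> carrier_mat p (m*l)" using mult_carrier_mat[OF CAlOL Tc] .
  have CR: "C * R \<in> carrier_mat p (m*l)" using mult_carrier_mat[OF C Rc] .
  have M1c: "M1 \<in> carrier_mat p (p*l)" unfolding M1_def by (rule CAlOL)
  have M2c: "M2 \<in> carrier_mat p (m*l)" unfolding M2_def by (rule minus_carrier_mat[OF CAlOLT])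
  have xs: "x s \<in> carrier_vec n" by (rule x)
  have TU: "T *\<^sub>v Uv \<in> carrier_vec (p*l)" using mult_mat_vec_carrier[OF Tc Uc] .
  define z where "z = OL *\<^sub>v (T *\<^sub>v Uv)"
  have zc: "z \<in> carrier_vec n" unfolding z_def using mult_mat_vec_carrier[OF OL TU] .
  have RU: "R *\<^sub>v Uv \<in> carrier_vec n" using mult_mat_vec_carrier[OF Rc Uc] .
  have Ox: "Ob *\<^sub>v x s \<in> carrier_vec (p*l)" using mult_mat_vec_carrier[OF Oc xs] .
  have Alx: "Al *\<^sub>v x s \<in> carrier_vec n" using mult_mat_vec_carrier[OF Alc xs] .
  have Alz: "Al *\<^sub>v z \<in> carrier_vec n" using mult_mat_vec_carrier[OF Alc zc] .

  have dC: "dim_row C = p" using C by simp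
  have dB: "dim_col B = m" using B by simp
  have Zdef: "Z_mat A B C OL l = mat p (p*l+m*l) (\<lambda>(i,j). if j < p*l then M1 $$ (i,j) else M2 $$ (i, j - p*l))"
    unfolding Z_mat_def Let_def M1_def M2_def Al_def R_def T_def dC dB by (rule refl)
  have w: "past_window p m l (\<lambda>j. C *\<^sub>v x j) u k = Yv @\<^sub>v Uv"
    by (rule eq_vecI) (auto simp: past_window_def Yv_def Uv_def s_def)
  have Zsplit: "Z_mat A B C OL l *\<^sub>v (Yv @\<^sub>v Uv) = M1 *\<^sub>v Yv + M2 *\<^sub>v Uv"
  proof (rule eq_vecI)
    show "dim_vec (Z_mat A B C OL l *\<^sub>v (Yv @\<^sub>v Uv)) = dim_vec (M1 *\<^sub>v Yv + M2 *\<^sub>v Uv)"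
      using M2c unfolding Zdef by simp
    fix i assume "i < dim_vec (M1 *\<^sub>v Yv + M2 *\<^sub>v Uv)"
    then have i: "i < p" using M2c by simp
    have r1: "row M1 i \<in> carrier_vec (p*l)" by (rule carrier_vecI) (use M1c in simp)
    have r2: "row M2 i \<in> carrier_vec (m*l)" by (rule carrier_vecI) (use M2c in simp)
    have rowZ: "row (Z_mat A B C OL l) i = row M1 i @\<^sub>v row M2 i"
      by (rule eq_vecI) (use i M1c M2c in \<open>auto simp: Zdef\<close>)
    have "(Z_mat A B C OL l *\<^sub>v (Yv @\<^sub>v Uv)) $ i = row (Z_mat A B C OL l) i \<bullet> (Yv @\<^sub>v Uv)"
      using i unfolding Zdef by simp
    also have "\<dots> = row M1 i \<bullet> Yv + row M2 i \<bullet> Uv"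
      unfolding rowZ by (rule scalar_prod_append[OF r1 r2 Yc Uc])
    also have "\<dots> = (M1 *\<^sub>v Yv + M2 *\<^sub>v Uv) $ i" using i M1c M2c by simp
    finally show "(Z_mat A B C OL l *\<^sub>v (Yv @\<^sub>v Uv)) $ i = (M1 *\<^sub>v Yv + M2 *\<^sub>v Uv) $ i" .
  qed
  have Y: "Yv = Ob *\<^sub>v x s + T *\<^sub>v Uv"
    unfolding Yv_def Ob_def T_def Uv_def by (rule Yv_eq[where u=u and x=x, OF A B C u x rec])
  have OLY: "OL *\<^sub>v Yv = x s + z"
  proof -
    have "OL *\<^sub>v Yv = OL *\<^sub>v (Ob *\<^sub>v x s) + z" unfolding Y z_def
      by (rule mult_add_distrib_mat_vec[OF OL Ox TU])
    also have "OL *\<^sub>v (Ob *\<^sub>v x s) = (OL * Ob) *\<^sub>v x s"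
      by (rule assoc_mult_mat_vec[OF OL Oc xs, symmetric])
    also have "\<dots> = x s" unfolding Ob_def OLO using one_mult_mat_vec[OF xs] .
    finally show ?thesis .
  qed
  have E1: "M1 *\<^sub>v Yv = C *\<^sub>v (Al *\<^sub>v x s) + C *\<^sub>v (Al *\<^sub>v z)"
  proof -
    have "M1 *\<^sub>v Yv = (C * Al) *\<^sub>v (OL *\<^sub>v Yv)" unfolding M1_def
      by (rule assoc_mult_mat_vec[OF CAl OL Yc])
    also have "\<dots> = C *\<^sub>v (Al *\<^sub>v (x s + z))" unfolding OLY
      by (rule assoc_mult_mat_vec[OF C Alc add_carrier_vec[OF xs zc]])
    also have "Al *\<^sub>v (x s + z) = Al *\<^sub>v x s + Al *\<^sub>v z"
      by (rule mult_add_distrib_mat_vec[OF Alc xs zc])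
    also have "C *\<^sub>v (Al *\<^sub>v x s + Al *\<^sub>v z) = C *\<^sub>v (Al *\<^sub>v x s) + C *\<^sub>v (Al *\<^sub>v z)"
      by (rule mult_add_distrib_mat_vec[OF C Alx Alz])
    finally show ?thesis .
  qed
  have E2: "M2 *\<^sub>v Uv = C *\<^sub>v (R *\<^sub>v Uv) - C *\<^sub>v (Al *\<^sub>v z)"
  proof -
    have "M2 *\<^sub>v Uv = (C * R) *\<^sub>v Uv - (C * Al * OL * T) *\<^sub>v Uv" unfolding M2_def
      by (rule minus_mult_distrib_mat_vec[OF CR CAlOLT Uc])
    also have "(C * R) *\<^sub>v Uv = C *\<^sub>v (R *\<^sub>v Uv)" by (rule assoc_mult_mat_vec[OF C Rc Uc])
    also have "(C * Al * OL * T) *\<^sub>v Uv = (C * Al * OL) *\<^sub>v (T *\<^sub>v Uv)"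
      by (rule assoc_mult_mat_vec[OF CAlOL Tc Uc])
    also have "\<dots> = (C * Al) *\<^sub>v z" unfolding z_def by (rule assoc_mult_mat_vec[OF CAl OL TU])
    also have "\<dots> = C *\<^sub>v (Al *\<^sub>v z)" by (rule assoc_mult_mat_vec[OF C Alc zc])
    finally show ?thesis .
  qed
  have E3: "C *\<^sub>v x k = C *\<^sub>v (Al *\<^sub>v x s) + C *\<^sub>v (R *\<^sub>v Uv)"
  proof -
    have "x k = x (s + l)" unfolding s_def using kl by simp
    also have "\<dots> = Al *\<^sub>v x s + Ssum A B u s l" unfolding Al_def
      by (rule x_shift[where u=u and x=x, OF A B u x rec])
    also have "Ssum A B u s l = R *\<^sub>v Uv" unfolding R_def Uv_def by (rule R_eq[OF A B u])
    finally have "x k = Al *\<^sub>v x s + R *\<^sub>v Uv" .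
    then show ?thesis using mult_add_distrib_mat_vec[OF C Alx RU] by simp
  qed
  have c1: "C *\<^sub>v (Al *\<^sub>v x s) \<in> carrier_vec p" using mult_mat_vec_carrier[OF C Alx] .
  have c2: "C *\<^sub>v (Al *\<^sub>v z) \<in> carrier_vec p" using mult_mat_vec_carrier[OF C Alz] .
  have c3: "C *\<^sub>v (R *\<^sub>v Uv) \<in> carrier_vec p" using mult_mat_vec_carrier[OF C RU] .
  have fin: "\<And>a b c :: real vec. a \<in> carrier_vec p \<Longrightarrow> b \<in> carrier_vec p \<Longrightarrow> c \<in> carrier_vec p \<Longrightarrow>
     (a + b) + (c - b) = a + c"
    by (rule eq_vecI) auto
  show ?thesis unfolding w Zsplit E1 E2 E3 by (rule fin[OF c1 c2 c3])
qed


lemma F_carrier: "F_mat p m l \<in> carrier_mat (p*l+m*l) (p*l+m*l)"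
  unfolding F_mat_def shift_mat_def by (rule carrier_matI) auto

lemma L_carrier: "L_mat p m l \<in> carrier_mat (p*l+m*l) p"
  unfolding L_mat_def by simp

lemma Bl_carrier: "Bl_mat p m l \<in> carrier_mat (p*l+m*l) m"
  unfolding Bl_mat_def by simp

lemma F_entry:
  assumes i: "i < p*l+m*l" and j: "j < p*l+m*l"
  shows "F_mat p m l $$ (i,j) = (if (i < p*l \<and> j = i + p \<and> j < p*l) \<or> (p*l \<le> i \<and> j = i + m) then 1 else 0)"
proof (cases "i < p*l")
  case True
  then have p: "p > 0" by (cases p) auto
  show ?thesis
  proof (cases "j < p*l")
    case jT: True
    have "F_mat p m l $$ (i,j) = shift_mat p l $$ (i,j)"
      unfolding F_mat_def using i j True jT by (simp add: shift_mat_def)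
    also have "\<dots> = (if j = i + p then 1 else 0)"
      using True jT shift_iff[OF p, of j i] by (simp add: shift_mat_def)
    finally show ?thesis using True jT by simp
  next
    case jF: False
    have "F_mat p m l $$ (i,j) = 0"
      unfolding F_mat_def using i j True jF by (simp add: shift_mat_def)
    then show ?thesis using True jF by simp
  qed
next
  case False
  then have m: "m > 0" using i by (cases m) auto
  show ?thesis
  proof (cases "j < p*l")
    case jT: True
    have "F_mat p m l $$ (i,j) = 0"
      unfolding F_mat_def using i j False jT by (simp add: shift_mat_def)
    then show ?thesis using False jT by auto
  next
    case jF: False
    have "F_mat p m l $$ (i,j) = shift_mat m l $$ (i - p*l, j - p*l)"
      unfolding F_mat_def using i j False jF by (simp add: shift_mat_def)
    also have "\<dots> = (if j - p*l = i - p*l + m then 1 else 0)"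
      using False jF i j shift_iff[OF m, of "j - p*l" "i - p*l"] by (simp add: shift_mat_def)
    finally show ?thesis using False jF by auto
  qed
qed


lemma window_step:
  fixes Y u :: "nat \<Rightarrow> real vec"
  assumes Y: "\<And>j. Y j \<in> carrier_vec p" and u: "\<And>j. u j \<in> carrier_vec m" and kl: "l \<le> k"
  shows "F_mat p m l *\<^sub>v past_window p m l Y u k + L_mat p m l *\<^sub>v Y k + Bl_mat p m l *\<^sub>v u k
    = past_window p m l Y u (Suc k)"
proof (rule eq_vecI)
  let ?w = "past_window p m l Y u k"
  have wc: "?w \<in> carrier_vec (p*l+m*l)" unfolding past_window_def by simp
  show "dim_vec (F_mat p m l *\<^sub>v ?w + L_mat p m l *\<^sub>v Y k + Bl_mat p m l *\<^sub>v u k) = dim_vec (past_window p m l Y u (Suc k))"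
    using Bl_carrier[of p m l] by (simp add: past_window_def)
  fix i assume "i < dim_vec (past_window p m l Y u (Suc k))"
  then have i: "i < p*l+m*l" by (simp add: past_window_def)
  then obtain l' where l': "l = Suc l'" by (cases l) auto
  have idx: "(F_mat p m l *\<^sub>v ?w + L_mat p m l *\<^sub>v Y k + Bl_mat p m l *\<^sub>v u k) $ i
     = (F_mat p m l *\<^sub>v ?w) $ i + (L_mat p m l *\<^sub>v Y k) $ i + (Bl_mat p m l *\<^sub>v u k) $ i"
    using i F_carrier[of p m l] L_carrier[of p m l] Bl_carrier[of p m l] by simp
  have Lent: "\<And>j. j < p \<Longrightarrow> L_mat p m l $$ (i,j) = (if p*l - p \<le> i \<and> i < p*l \<and> i - (p*l - p) = j then 1 else 0)"
    using i by (simp add: L_mat_def)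
  have Bent: "\<And>j. j < m \<Longrightarrow> Bl_mat p m l $$ (i,j) = (if p*l + m*l - m \<le> i \<and> i - (p*l + m*l - m) = j then 1 else 0)"
    using i by (simp add: Bl_mat_def)
  have Fent: "\<And>j. j < p*l+m*l \<Longrightarrow> F_mat p m l $$ (i,j) = (if (i < p*l \<and> j = i + p \<and> j < p*l) \<or> (p*l \<le> i \<and> j = i + m) then 1 else 0)"
    using F_entry[OF i] by simp
  have sk: "Suc k - l = Suc (k - l)" using kl by simp
  show "(F_mat p m l *\<^sub>v ?w + L_mat p m l *\<^sub>v Y k + Bl_mat p m l *\<^sub>v u k) $ i = past_window p m l Y u (Suc k) $ i"
  proof (cases "i < p*l")
    case True
    then have p: "p > 0" by (cases p) auto
    have Bz: "(Bl_mat p m l *\<^sub>v u k) $ i = 0"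
      by (rule mult_row_zero[OF Bl_carrier i _ u]) (use True l' Bent in auto)
    show ?thesis
    proof (cases "i + p < p*l")
      case a: True
      have F1: "(F_mat p m l *\<^sub>v ?w) $ i = ?w $ (i + p)"
        by (rule mult_row_unit[OF F_carrier i _ _ wc]) (use a True Fent in auto)
      have Lz: "(L_mat p m l *\<^sub>v Y k) $ i = 0"
        by (rule mult_row_zero[OF L_carrier i _ Y]) (use a Lent in auto)
      have "?w $ (i + p) = Y (k - l + (i + p) div p) $ ((i + p) mod p)"
        using a by (simp add: past_window_def)
      also have "\<dots> = Y (Suc k - l + i div p) $ (i mod p)"
        using p sk by simp
      also have "\<dots> = past_window p m l Y u (Suc k) $ i"
        using True i by (simp add: past_window_def)
      finally show ?thesis unfolding idx F1 Lz Bz by simp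
    next
      case b: False
      have Fz: "(F_mat p m l *\<^sub>v ?w) $ i = 0"
        by (rule mult_row_zero[OF F_carrier i _ wc]) (use b True Fent in auto)
      have t: "i - (p*l - p) < p" using True b by simp
      have L1: "(L_mat p m l *\<^sub>v Y k) $ i = Y k $ (i - (p*l - p))"
        by (rule mult_row_unit[OF L_carrier i t _ Y]) (use b True Lent in auto)
      define tt where "tt = i - (p*l - p)"
      have ie: "i = tt + l' * p" using True b l' unfolding tt_def by (simp add: algebra_simps)
      have tp: "tt < p" using t unfolding tt_def .
      have dv: "i div p = l'" and md: "i mod p = i - (p*l - p)"
        unfolding tt_def[symmetric] by (subst ie, use tp p in simp)+
      have "past_window p m l Y u (Suc k) $ i = Y (Suc k - l + i div p) $ (i mod p)"
        using True i by (simp add: past_window_def)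
      also have "\<dots> = Y k $ (i - (p*l - p))" using dv md sk l' kl by simp
      finally show ?thesis unfolding idx Fz L1 Bz by simp
    qed
  next
    case False
    then have m: "m > 0" using i by (cases m) auto
    have Lz: "(L_mat p m l *\<^sub>v Y k) $ i = 0"
      by (rule mult_row_zero[OF L_carrier i _ Y]) (use False Lent in auto)
    show ?thesis
    proof (cases "i + m < p*l+m*l")
      case c: True
      have F1: "(F_mat p m l *\<^sub>v ?w) $ i = ?w $ (i + m)"
        by (rule mult_row_unit[OF F_carrier i _ _ wc]) (use c False Fent in auto)
      have Bz: "(Bl_mat p m l *\<^sub>v u k) $ i = 0"
        by (rule mult_row_zero[OF Bl_carrier i _ u]) (use c Bent in auto)
      have e: "i + m - p*l = (i - p*l) + m" using False by simp
      have "?w $ (i + m) = u (k - l + (i + m - p*l) div m) $ ((i + m - p*l) mod m)"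
        using c False by (simp add: past_window_def)
      also have "\<dots> = u (Suc k - l + (i - p*l) div m) $ ((i - p*l) mod m)"
        unfolding e using m sk by simp
      also have "\<dots> = past_window p m l Y u (Suc k) $ i"
        using False i by (simp add: past_window_def)
      finally show ?thesis unfolding idx F1 Lz Bz by simp
    next
      case d: False
      have Fz: "(F_mat p m l *\<^sub>v ?w) $ i = 0"
        by (rule mult_row_zero[OF F_carrier i _ wc]) (use d False Fent in auto)
      have t: "i - (p*l + m*l - m) < m" using i d by simp
      have B1: "(Bl_mat p m l *\<^sub>v u k) $ i = u k $ (i - (p*l + m*l - m))"
        by (rule mult_row_unit[OF Bl_carrier i t _ u]) (use d Bent in auto)
      have t2: "i - (p*l + m*l - m) = i - p*l - l' * m" using l' by (simp add: algebra_simps)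
      define tt where "tt = i - (p*l + m*l - m)"
      have ie: "i - p*l = tt + l' * m" using False d l' unfolding tt_def by (simp add: algebra_simps)
      have tp: "tt < m" using t unfolding tt_def .
      have dv: "(i - p*l) div m = l'" and md: "(i - p*l) mod m = i - (p*l + m*l - m)"
        unfolding tt_def[symmetric] by (subst ie, use tp m in simp)+
      have "past_window p m l Y u (Suc k) $ i = u (Suc k - l + (i - p*l) div m) $ ((i - p*l) mod m)"
        using False i by (simp add: past_window_def)
      also have "\<dots> = u k $ (i - (p*l + m*l - m))" using dv md sk l' kl by simp
      finally show ?thesis unfolding idx Fz Lz B1 by simp
    qed
  qed
qed


theorem lemma3:
  fixes A B C OL :: "real mat" and n m p :: nat
    and xhat :: "real vec" and u :: "nat \<Rightarrow> real vec"
  assumes "A \<in> carrier_mat n n" and "B \<in> carrier_mat n m" and "C \<in> carrier_mat p n"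
    and "observable A C"
    and "OL \<in> carrier_mat n (p * obs_index A C)"
    and "OL * obs_mat A C (obs_index A C) = 1\<^sub>m n"
    and "xhat \<in> carrier_vec n"
    and "\<And>k. u k \<in> carrier_vec m"
  shows "\<exists>\<xi>hat. \<forall>x \<xi>.
    (x 0 = xhat \<and> (\<forall>k. x (Suc k) = A *\<^sub>v x k + B *\<^sub>v u k)) \<longrightarrow>
    (\<xi> (obs_index A C) = \<xi>hat \<and>
       (\<forall>k \<ge> obs_index A C. \<xi> (Suc k) = Al_mat A B C OL (obs_index A C) *\<^sub>v \<xi> k
                                   + Bl_mat p m (obs_index A C) *\<^sub>v u k)) \<longrightarrow>
    (\<forall>k \<ge> obs_index A C.
       \<xi> k = past_window p m (obs_index A C) (\<lambda>j. C *\<^sub>v x j) u k \<and>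
       C *\<^sub>v x k = Z_mat A B C OL (obs_index A C) *\<^sub>v \<xi> k)"
proof -
  note A = assms(1) and B = assms(2) and C = assms(3) and OL = assms(5) and OLO = assms(6)
    and xh = assms(7) and u = assms(8)
  define l where "l = obs_index A C"
  define xs :: "nat \<Rightarrow> real vec" where "xs = rec_nat xhat (\<lambda>k v. A *\<^sub>v v + B *\<^sub>v u k)"
  have xs0: "xs 0 = xhat" unfolding xs_def by simp
  have xsS: "\<And>k. xs (Suc k) = A *\<^sub>v xs k + B *\<^sub>v u k" unfolding xs_def by simp
  show ?thesis unfolding l_def[symmetric]
  proof (rule exI[of _ "past_window p m l (\<lambda>j. C *\<^sub>v xs j) u l"], intro allI impI)
    fix x \<xi> :: "nat \<Rightarrow> real vec"
    assume hx: "x 0 = xhat \<and> (\<forall>k. x (Suc k) = A *\<^sub>v x k + B *\<^sub>v u k)"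
    assume h\<xi>: "\<xi> l = past_window p m l (\<lambda>j. C *\<^sub>v xs j) u l \<and>
       (\<forall>k \<ge> l. \<xi> (Suc k) = Al_mat A B C OL l *\<^sub>v \<xi> k + Bl_mat p m l *\<^sub>v u k)"
    have rec: "\<And>k. x (Suc k) = A *\<^sub>v x k + B *\<^sub>v u k" using hx by blast
    have xeq: "x k = xs k" for k
    proof (induction k)
      case 0 then show ?case using hx xs0 by simp
    next
      case (Suc k) then show ?case using rec[of k] xsS[of k] by simp
    qed
    have xc: "x k \<in> carrier_vec n" for k
    proof (induction k)
      case 0 then show ?case using hx xh by simp
    next
      case (Suc k)
      have "A *\<^sub>v x k + B *\<^sub>v u k \<in> carrier_vec n"
        using add_carrier_vec[OF mult_mat_vec_carrier[OF A Suc] mult_mat_vec_carrier[OF B u]] .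
      then show ?case using rec[of k] by simp
    qed
    have xsx: "xs = x" using xeq by auto
    define w where "w = (\<lambda>k. past_window p m l (\<lambda>j. C *\<^sub>v x j) u k)"
    have Yc: "\<And>j. C *\<^sub>v x j \<in> carrier_vec p" using mult_mat_vec_carrier[OF C xc] .
    have Zw: "\<And>k. l \<le> k \<Longrightarrow> Z_mat A B C OL l *\<^sub>v w k = C *\<^sub>v x k"
      unfolding w_def
      by (rule Z_window[where u=u and x=x, OF A B C OL[unfolded l_def[symmetric]] OLO[unfolded l_def[symmetric]] u xc rec])
    have dC: "dim_row C = p" using C by simp
    have dB: "dim_col B = m" using B by simp
    have Zc: "Z_mat A B C OL l \<in> carrier_mat p (p*l+m*l)"
      unfolding Z_mat_def Let_def dC dB by simp
    have Ald: "Al_mat A B C OL l = F_mat p m l + L_mat p m l * Z_mat A B C OL l"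
      unfolding Al_mat_def dC dB by (rule refl)
    have LZ: "L_mat p m l * Z_mat A B C OL l \<in> carrier_mat (p*l+m*l) (p*l+m*l)"
      using mult_carrier_mat[OF L_carrier Zc] .
    have wc: "\<And>k. w k \<in> carrier_vec (p*l+m*l)" unfolding w_def past_window_def by simp
    have stepw: "\<And>k. l \<le> k \<Longrightarrow> Al_mat A B C OL l *\<^sub>v w k + Bl_mat p m l *\<^sub>v u k = w (Suc k)"
    proof -
      fix k assume kl: "l \<le> k"
      have "Al_mat A B C OL l *\<^sub>v w k = F_mat p m l *\<^sub>v w k + (L_mat p m l * Z_mat A B C OL l) *\<^sub>v w k"
        unfolding Ald by (rule add_mult_distrib_mat_vec[OF F_carrier LZ wc])
      also have "(L_mat p m l * Z_mat A B C OL l) *\<^sub>v w k = L_mat p m l *\<^sub>v (Z_mat A B C OL l *\<^sub>v w k)"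
        by (rule assoc_mult_mat_vec[OF L_carrier Zc wc])
      also have "Z_mat A B C OL l *\<^sub>v w k = C *\<^sub>v x k" by (rule Zw[OF kl])
      finally have "Al_mat A B C OL l *\<^sub>v w k = F_mat p m l *\<^sub>v w k + L_mat p m l *\<^sub>v (C *\<^sub>v x k)" .
      then show "Al_mat A B C OL l *\<^sub>v w k + Bl_mat p m l *\<^sub>v u k = w (Suc k)"
        unfolding w_def using window_step[where Y="\<lambda>j. C *\<^sub>v x j" and u=u, OF Yc u kl] by simp
    qed
    have \<xi>w: "\<xi> k = w k" if kl: "l \<le> k" for k
      using kl
    proof (induction k rule: dec_induct)
      case base then show ?case using h\<xi> xsx unfolding w_def by simp
    next
      case (step k)
      have "\<xi> (Suc k) = Al_mat A B C OL l *\<^sub>v \<xi> k + Bl_mat p m l *\<^sub>v u k" using h\<xi> step(1) by blast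
      also have "\<dots> = w (Suc k)" unfolding step(3) by (rule stepw[OF step(1)])
      finally show ?case .
    qed
    fix k assume kl: "l \<le> k"
    show "\<xi> k = past_window p m l (\<lambda>j. C *\<^sub>v x j) u k \<and> C *\<^sub>v x k = Z_mat A B C OL l *\<^sub>v \<xi> k"
    proof
      show "\<xi> k = past_window p m l (\<lambda>j. C *\<^sub>v x j) u k" using \<xi>w[OF kl] unfolding w_def .
      show "C *\<^sub>v x k = Z_mat A B C OL l *\<^sub>v \<xi> k" using \<xi>w[OF kl] Zw[OF kl] by simp
    qed
  qed
qed

end
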